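(* Let $V:\mathbb{R}^3\to\mathbb{R}$ satisfy \[ \int_{\mathbb{R}^3\times\mathbb{R}^3}\frac{|V(x)||V(y)|}{|x-y|^2}\,dx\,dy<(4\pi)^2,\qquad \|V\|_{\mathcal K}:=\sup_{x\in\mathbb{R}^3}\int_{\mathbb{R}^3}\frac{|V(y)|}{|x-y|}\,dy<4\pi . \] Then for every positive integer $k$, \[ \sup_{x_0,x_{k+1}\in\mathbb{R}^3}\int_{\mathbb{R}^{3k}}\frac{\prod_{j=1}^k|V(x_j)|}{\prod_{j=0}^k|x_j-x_{j+1}|}\sum_{\ell=0}^k|x_\ell-x_{\ell+1}|\,dx_1\cdots dx_k\le(k+1)\|V\|_{\mathcal K}^k . \] *)

theory Defs
  imports "HOL-Analysis.Analysis"
begin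

definition kato_norm :: "(real^3 \<Rightarrow> real) \<Rightarrow> ennreal" where
  "kato_norm V = (SUP x. \<integral>\<^sup>+ y. ennreal (\<bar>V y\<bar> / dist x y) \<partial>lborel)"

definition chain_pt :: "nat \<Rightarrow> real^3 \<Rightarrow> real^3 \<Rightarrow> (nat \<Rightarrow> real^3) \<Rightarrow> nat \<Rightarrow> real^3" where
  "chain_pt k x0 xk1 xs j = (if j = 0 then x0 else if j = k + 1 then xk1 else xs j)"

definition chain_integral :: "(real^3 \<Rightarrow> real) \<Rightarrow> nat \<Rightarrow> real^3 \<Rightarrow> real^3 \<Rightarrow> ennreal" where
  "chain_integral V k x0 xk1 =
     (\<integral>\<^sup>+ xs. ennreal ((\<Prod>j\<in>{1..k}. \<bar>V (xs j)\<bar>)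
          / (\<Prod>j\<in>{0..k}. dist (chain_pt k x0 xk1 xs j) (chain_pt k x0 xk1 xs (j + 1)))
          * (\<Sum>l\<in>{0..k}. dist (chain_pt k x0 xk1 xs l) (chain_pt k x0 xk1 xs (l + 1))))
      \<partial>(\<Pi>\<^sub>M j\<in>{1..k}. (lborel :: (real^3) measure)))"

end

theory Submission
  imports Defs
begin

lemma tree_meas:
  fixes G :: "real^3 \<Rightarrow> real^3 \<Rightarrow> ennreal"
  assumes Gm: "(\<lambda>p. G (fst p) (snd p)) \<in> borel_measurable (lborel \<Otimes>\<^sub>M lborel)"
  shows "(\<lambda>xs. \<Prod>i\<in>I. G (if par i \<in> I then xs (par i) else c (par i)) (xs i))
     \<in> borel_measurable (PiM I (\<lambda>_. lborel))"
proof (rule borel_measurable_prod_ennreal)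
  fix i assume i: "i \<in> I"
  have comp: "(\<lambda>xs. xs j) \<in> measurable (PiM I (\<lambda>_. lborel)) lborel" if "j \<in> I" for j
    using that by (rule measurable_component_singleton)
  have a: "(\<lambda>xs. if par i \<in> I then xs (par i) else c (par i)) \<in> measurable (PiM I (\<lambda>_. lborel)) lborel"
    by (cases "par i \<in> I") (simp_all add: comp[simplified])
  have "(\<lambda>xs. (if par i \<in> I then xs (par i) else c (par i), xs i))
     \<in> measurable (PiM I (\<lambda>_. lborel)) (lborel \<Otimes>\<^sub>M lborel)"
    by (rule measurable_Pair[OF a comp[OF i]])
  from measurable_compose[OF this Gm]
  show "(\<lambda>xs. G (if par i \<in> I then xs (par i) else c (par i)) (xs i)) \<in> borel_measurable (PiM I (\<lambda>_. lborel))"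
    by simp
qed

lemma G_meas:
  fixes V :: "real^3 \<Rightarrow> real"
  assumes meas: "V \<in> borel_measurable lborel"
  shows "(\<lambda>p. (\<lambda>x y. ennreal (\<bar>V y\<bar> / dist x y)) (fst p) (snd p)) \<in> borel_measurable (lborel \<Otimes>\<^sub>M lborel)"
  using meas by measurable

lemma tree_bound:
  fixes G :: "real^3 \<Rightarrow> real^3 \<Rightarrow> ennreal" and r :: "nat \<Rightarrow> nat"
  assumes Gm: "(\<lambda>p. G (fst p) (snd p)) \<in> borel_measurable (lborel \<Otimes>\<^sub>M lborel)"
    and GC: "\<And>x. (\<integral>\<^sup>+ y. G x y \<partial>lborel) \<le> C"
  shows "finite I \<Longrightarrow> (\<forall>i\<in>I. r (par i) < r i) \<Longrightarrow>
    (\<integral>\<^sup>+ xs. (\<Prod>i\<in>I. G (if par i \<in> I then xs (par i) else c (par i)) (xs i)) \<partial>PiM I (\<lambda>_. lborel)) \<le> C ^ card I"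
proof (induction "card I" arbitrary: I)
  case 0
  then have "I = {}" by simp
  then show ?case by (simp add: PiM_empty)
next
  case (Suc n)
  interpret product_sigma_finite "\<lambda>_. lborel" by standard
  have ne: "I \<noteq> {}" using Suc by auto
  have fin: "finite (r ` I)" "r ` I \<noteq> {}" using Suc.prems(1) ne by auto
  obtain i where i1: "i \<in> I" and i2: "r i = Max (r ` I)"
    using Max_in[OF fin] by auto
  have i: "i \<in> I" "\<And>j. j \<in> I \<Longrightarrow> r j \<le> r i"
    using i1 i2 Max_ge[OF fin(1)] by auto
  define J where "J = I - {i}"
  have IJ: "I = insert i J" "i \<notin> J" "finite J" using i Suc.prems by (auto simp: J_def)
  have cJ: "card J = n" using Suc.hyps(2) IJ by simp
  have pari: "par i \<noteq> i" using Suc.prems i by fastforce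
  have parj: "par j \<noteq> i" if "j \<in> J" for j
    using Suc.prems i that IJ by (metis insertCI leD)
  define P where "P = (\<lambda>xs. \<Prod>j\<in>J. G (if par j \<in> J then xs (par j) else c (par j)) (xs j))"
  have eq: "(\<Prod>j\<in>I. G (if par j \<in> I then (x(i:=y)) (par j) else c (par j)) ((x(i:=y)) j))
      = G (if par i \<in> J then x (par i) else c (par i)) y * P x" for x y
  proof -
    have "(\<Prod>j\<in>I. G (if par j \<in> I then (x(i:=y)) (par j) else c (par j)) ((x(i:=y)) j))
       = G (if par i \<in> I then (x(i:=y)) (par i) else c (par i)) y *
         (\<Prod>j\<in>J. G (if par j \<in> I then (x(i:=y)) (par j) else c (par j)) ((x(i:=y)) j))"
      using IJ by simp
    also have "(\<Prod>j\<in>J. G (if par j \<in> I then (x(i:=y)) (par j) else c (par j)) ((x(i:=y)) j)) = P x"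
      unfolding P_def
      by (rule prod.cong) (use IJ parj in auto)
    also have "(if par i \<in> I then (x(i:=y)) (par i) else c (par i)) = (if par i \<in> J then x (par i) else c (par i))"
      using IJ pari by auto
    finally show ?thesis .
  qed
  have "(\<integral>\<^sup>+ xs. (\<Prod>j\<in>I. G (if par j \<in> I then xs (par j) else c (par j)) (xs j)) \<partial>PiM I (\<lambda>_. lborel))
     = (\<integral>\<^sup>+ x. (\<integral>\<^sup>+ y. G (if par i \<in> J then x (par i) else c (par i)) y * P x \<partial>lborel) \<partial>PiM J (\<lambda>_. lborel))"
    unfolding IJ(1)
    by (subst product_nn_integral_insert[OF IJ(3) IJ(2) tree_meas[OF Gm]])
      (rule nn_integral_cong, rule nn_integral_cong, rule eq[unfolded IJ(1)])
  also have "\<dots> = (\<integral>\<^sup>+ x. (\<integral>\<^sup>+ y. G (if par i \<in> J then x (par i) else c (par i)) y \<partial>lborel) * P x \<partial>PiM J (\<lambda>_. lborel))"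
  proof (rule nn_integral_cong)
    fix x
    have "(\<lambda>y. G (if par i \<in> J then x (par i) else c (par i)) y) \<in> borel_measurable lborel"
      using measurable_Pair2[OF Gm] by simp
    then show "(\<integral>\<^sup>+ y. G (if par i \<in> J then x (par i) else c (par i)) y * P x \<partial>lborel) =
      (\<integral>\<^sup>+ y. G (if par i \<in> J then x (par i) else c (par i)) y \<partial>lborel) * P x"
      by (rule nn_integral_multc)
  qed
  also have "\<dots> \<le> (\<integral>\<^sup>+ x. C * P x \<partial>PiM J (\<lambda>_. lborel))"
    by (intro nn_integral_mono mult_right_mono GC) simp
  also have "\<dots> = C * (\<integral>\<^sup>+ x. P x \<partial>PiM J (\<lambda>_. lborel))"
    unfolding P_def by (rule nn_integral_cmult[OF tree_meas[OF Gm]])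
  also have "\<dots> \<le> C * C ^ card J"
    unfolding P_def
    by (intro mult_left_mono Suc.hyps(1)) (use cJ IJ Suc.prems in auto)
  also have "\<dots> = C ^ card I" using IJ by simp
  finally show ?case .
qed

lemma reidx:
  fixes d :: "nat \<Rightarrow> real"
  assumes "l \<le> k"
  shows "(\<Prod>j\<in>{1..k}. (if j \<le> l then d (j-1) else d j)) = (\<Prod>m\<in>{0..k}-{l}. d m)"
proof -
  have "bij_betw (\<lambda>j. if j \<le> l then j - 1 else j) {1..k} ({0..k}-{l})"
  proof (rule bij_betw_imageI)
    show "inj_on (\<lambda>j. if j \<le> l then j - 1 else j) {1..k}"
      by (auto simp: inj_on_def split: if_splits)
    show "(\<lambda>j. if j \<le> l then j - 1 else j) ` {1..k} = {0..k} - {l}"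
    proof
      show "(\<lambda>j. if j \<le> l then j - 1 else j) ` {1..k} \<subseteq> {0..k} - {l}" using assms by auto
      show "{0..k} - {l} \<subseteq> (\<lambda>j. if j \<le> l then j - 1 else j) ` {1..k}"
      proof
        fix m assume m: "m \<in> {0..k} - {l}"
        show "m \<in> (\<lambda>j. if j \<le> l then j - 1 else j) ` {1..k}"
        proof (cases "m < l")
          case True then show ?thesis using m assms by (intro image_eqI[of _ _ "m+1"]) auto
        next
          case False then show ?thesis using m assms by (intro image_eqI[of _ _ "m"]) auto
        qed
      qed
    qed
  qed
  from prod.reindex_bij_betw[OF this, of d] show ?thesis
    by (simp add: if_distrib)
qed

lemma key_real:
  fixes v d :: "nat \<Rightarrow> real"
  assumes v: "\<And>j. v j \<ge> 0" and d: "\<And>m. d m \<ge> 0"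
  shows "(\<Prod>j\<in>{1..k}. v j) / (\<Prod>m\<in>{0..k}. d m) * (\<Sum>l\<in>{0..k}. d l)
     \<le> (\<Sum>l\<in>{0..k}. \<Prod>j\<in>{1..k}. v j / (if j \<le> l then d (j-1) else d j))"
proof (cases "\<exists>m\<in>{0..k}. d m = 0")
  case True
  then have z: "(\<Prod>m\<in>{0..k}. d m) = 0" by simp
  show ?thesis unfolding z using v d
    by (auto intro!: sum_nonneg prod_nonneg divide_nonneg_nonneg)
next
  case False
  have "(\<Prod>j\<in>{1..k}. v j) / (\<Prod>m\<in>{0..k}. d m) * (\<Sum>l\<in>{0..k}. d l)
     = (\<Sum>l\<in>{0..k}. (\<Prod>j\<in>{1..k}. v j) * (d l / (\<Prod>m\<in>{0..k}. d m)))"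
    by (simp add: sum_distrib_left sum_divide_distrib)
  also have "\<dots> = (\<Sum>l\<in>{0..k}. \<Prod>j\<in>{1..k}. v j / (if j \<le> l then d (j-1) else d j))"
  proof (rule sum.cong[OF refl])
    fix l assume l: "l \<in> {0..k}"
    have "(\<Prod>m\<in>{0..k}. d m) = d l * (\<Prod>m\<in>{0..k}-{l}. d m)"
      using l by (simp add: prod.remove)
    then have "d l / (\<Prod>m\<in>{0..k}. d m) = 1 / (\<Prod>m\<in>{0..k}-{l}. d m)"
      using False l by auto
    also have "\<dots> = 1 / (\<Prod>j\<in>{1..k}. (if j \<le> l then d (j-1) else d j))"
      using reidx[of l k d] l by simp
    finally show "(\<Prod>j\<in>{1..k}. v j) * (d l / (\<Prod>m\<in>{0..k}. d m)) =
      (\<Prod>j\<in>{1..k}. v j / (if j \<le> l then d (j-1) else d j))"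
      by (simp add: prod_dividef)
  qed
  finally show ?thesis by simp
qed

lemma pointwise:
  fixes V :: "real^3 \<Rightarrow> real"
  assumes c_def: "c = (\<lambda>m. if m = 0 then x0 else xk1)"
  shows "ennreal ((\<Prod>j\<in>{1..k}. \<bar>V (xs j)\<bar>)
          / (\<Prod>j\<in>{0..k}. dist (chain_pt k x0 xk1 xs j) (chain_pt k x0 xk1 xs (j + 1)))
          * (\<Sum>l\<in>{0..k}. dist (chain_pt k x0 xk1 xs l) (chain_pt k x0 xk1 xs (l + 1))))
    \<le> (\<Sum>l\<in>{0..k}. \<Prod>j\<in>{1..k}. ennreal (\<bar>V (xs j)\<bar> / dist
          (if (if j \<le> l then j - 1 else j + 1) \<in> {1..k} then xs (if j \<le> l then j - 1 else j + 1)
           else c (if j \<le> l then j - 1 else j + 1)) (xs j)))"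
proof -
  define pt where "pt = chain_pt k x0 xk1 xs"
  define d where "d = (\<lambda>m. dist (pt m) (pt (m+1)))"
  define v where "v = (\<lambda>j. \<bar>V (pt j)\<bar>)"
  have ptm: "(if m \<in> {1..k} then xs m else c m) = pt m" if "m \<le> k + 1" for m
    using that by (auto simp: pt_def chain_pt_def c_def)
  have ptj: "xs j = pt j" if "j \<in> {1..k}" for j
    using that by (auto simp: pt_def chain_pt_def)
  have lhs: "(\<Prod>j\<in>{1..k}. \<bar>V (xs j)\<bar>) = (\<Prod>j\<in>{1..k}. v j)"
    by (rule prod.cong) (auto simp: v_def ptj)
  have rhs: "(\<Prod>j\<in>{1..k}. ennreal (\<bar>V (xs j)\<bar> / dist
          (if (if j \<le> l then j - 1 else j + 1) \<in> {1..k} then xs (if j \<le> l then j - 1 else j + 1)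
           else c (if j \<le> l then j - 1 else j + 1)) (xs j)))
      = ennreal (\<Prod>j\<in>{1..k}. v j / (if j \<le> l then d (j-1) else d j))" for l
  proof -
    have "(\<Prod>j\<in>{1..k}. ennreal (\<bar>V (xs j)\<bar> / dist
          (if (if j \<le> l then j - 1 else j + 1) \<in> {1..k} then xs (if j \<le> l then j - 1 else j + 1)
           else c (if j \<le> l then j - 1 else j + 1)) (xs j)))
       = (\<Prod>j\<in>{1..k}. ennreal (v j / (if j \<le> l then d (j-1) else d j)))"
    proof (rule prod.cong[OF refl])
      fix j assume j: "j \<in> {1..k}"
      have "(if (if j \<le> l then j - 1 else j + 1) \<in> {1..k} then xs (if j \<le> l then j - 1 else j + 1)
           else c (if j \<le> l then j - 1 else j + 1)) = pt (if j \<le> l then j - 1 else j + 1)"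
        using j by (intro ptm) auto
      moreover have "dist (pt (if j \<le> l then j - 1 else j + 1)) (pt j) = (if j \<le> l then d (j-1) else d j)"
        using j by (auto simp: d_def dist_commute)
      ultimately show "ennreal (\<bar>V (xs j)\<bar> / dist
          (if (if j \<le> l then j - 1 else j + 1) \<in> {1..k} then xs (if j \<le> l then j - 1 else j + 1)
           else c (if j \<le> l then j - 1 else j + 1)) (xs j)) = ennreal (v j / (if j \<le> l then d (j-1) else d j))"
        using j by (simp add: ptj v_def)
    qed
    also have "\<dots> = ennreal (\<Prod>j\<in>{1..k}. v j / (if j \<le> l then d (j-1) else d j))"
      by (rule prod_ennreal) (auto simp: v_def d_def)
    finally show ?thesis .
  qed
  have "ennreal ((\<Prod>j\<in>{1..k}. v j) / (\<Prod>m\<in>{0..k}. d m) * (\<Sum>l\<in>{0..k}. d l))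
     \<le> ennreal (\<Sum>l\<in>{0..k}. \<Prod>j\<in>{1..k}. v j / (if j \<le> l then d (j-1) else d j))"
    by (rule ennreal_leI, rule key_real) (auto simp: v_def d_def)
  also have "\<dots> = (\<Sum>l\<in>{0..k}. ennreal (\<Prod>j\<in>{1..k}. v j / (if j \<le> l then d (j-1) else d j)))"
    by (rule sum_ennreal[symmetric]) (auto intro!: prod_nonneg simp: v_def d_def)
  finally show ?thesis
    unfolding lhs rhs by (simp add: pt_def d_def)
qed

theorem lemma2p5:
  fixes V :: "real^3 \<Rightarrow> real" and k :: nat
  assumes meas: "V \<in> borel_measurable lborel"
    and h1: "(\<integral>\<^sup>+ p. ennreal (\<bar>V (fst p)\<bar> * \<bar>V (snd p)\<bar> / (dist (fst p) (snd p))\<^sup>2)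
              \<partial>((lborel :: (real^3) measure) \<Otimes>\<^sub>M (lborel :: (real^3) measure)))
             < ennreal ((4 * pi)\<^sup>2)"
    and h2: "kato_norm V < ennreal (4 * pi)"
    and k: "k \<ge> 1"
  shows "(SUP x0. SUP xk1. chain_integral V k x0 xk1) \<le> ennreal (real (k + 1)) * kato_norm V ^ k"
proof (intro SUP_least)
  fix x0 xk1 :: "real^3"
  define G where "G = (\<lambda>(x::real^3) y. ennreal (\<bar>V y\<bar> / dist x y))"
  define c where "c = (\<lambda>m::nat. if m = 0 then x0 else xk1)"
  define par where "par = (\<lambda>l j::nat. if j \<le> l then j - 1 else j + 1)"
  define F where "F = (\<lambda>l xs. \<Prod>j\<in>{1..k}. G (if par l j \<in> {1..k} then xs (par l j) else c (par l j)) (xs j))"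
  have Gm: "(\<lambda>p. G (fst p) (snd p)) \<in> borel_measurable (lborel \<Otimes>\<^sub>M lborel)"
    unfolding G_def using G_meas[OF meas] by simp
  have GC: "(\<integral>\<^sup>+ y. G x y \<partial>lborel) \<le> kato_norm V" for x
    unfolding G_def kato_norm_def by (rule SUP_upper) simp
  have Fm: "F l \<in> borel_measurable (PiM {1..k} (\<lambda>_. lborel))" for l
    unfolding F_def by (rule tree_meas[OF Gm])
  have Fb: "(\<integral>\<^sup>+ xs. F l xs \<partial>PiM {1..k} (\<lambda>_. lborel)) \<le> kato_norm V ^ k" if l: "l \<in> {0..k}" for l
  proof -
    have "\<forall>i\<in>{1..k}. (\<lambda>j. if j \<le> l then j else k + 2 - j) (par l i) < (\<lambda>j. if j \<le> l then j else k + 2 - j) i"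
      using l by (auto simp: par_def)
    from tree_bound[OF Gm GC, of "{1..k}", OF _ this, of c]
    show ?thesis unfolding F_def by simp
  qed
  have "chain_integral V k x0 xk1 \<le> (\<integral>\<^sup>+ xs. (\<Sum>l\<in>{0..k}. F l xs) \<partial>PiM {1..k} (\<lambda>_. lborel))"
    unfolding chain_integral_def F_def G_def par_def
    by (rule nn_integral_mono, rule pointwise[OF c_def])
  also have "\<dots> = (\<Sum>l\<in>{0..k}. (\<integral>\<^sup>+ xs. F l xs \<partial>PiM {1..k} (\<lambda>_. lborel)))"
    by (rule nn_integral_sum) (rule Fm)
  also have "\<dots> \<le> (\<Sum>l\<in>{0..k}. kato_norm V ^ k)"
    by (rule sum_mono) (rule Fb)
  also have "\<dots> = ennreal (real (k + 1)) * kato_norm V ^ k"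
    by (simp add: ennreal_of_nat_eq_real_of_nat)
  finally show "chain_integral V k x0 xk1 \<le> ennreal (real (k + 1)) * kato_norm V ^ k" .
qed

end
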